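(* Let $a\in\omega\setminus\{0\}$ and $h(n)=2^{(a^n)}$. Then $\mathrm{IOE}(h)\ge_S\mathcal D(1/a)$ and $\mathrm{AED}(h)\le_S\mathcal B(1/a)$.
   Context: A mass problem is a nonempty set of functions $\omega\to\omega$. $\mathcal B\le_S\mathcal C$ (equivalently $\mathcal C\ge_S\mathcal B$) means there is a Turing functional $\Phi$ with $\Phi^g\in\mathcal B$ for all $g\in\mathcal C$. For bit sequences $x,y$, $x\leftrightarrow y=\{n:x(n)=y(n)\}$; for $Z\subseteq\omega$, $\underline\rho(Z)=\liminf_n|Z\cap[0,n)|/n$. $\mathcal D(p)$ is the set of bit sequences $y$ with $\underline\rho(x\leftrightarrow y)\le p$ for every computable bit sequence $x$; $\mathcal B(p)$ is the set of bit sequences $y$ with $\underline\rho(x\leftrightarrow y)>p$ for every computable bit sequence $x$. $\mathrm{IOE}(h)$ is the set of functions $y:\omega\to\omega$ such that every computable $x$ with $x(n)<h(n)$ for all $n$ satisfies $x(n)=y(n)$ for infinitely many $n$; $\mathrm{AED}(h)$ is the set of functions $y$ with $y(n)<h(n)$ for all $n$ such that every computable $x$ satisfies $x(n)\neq y(n)$ for all but finitely many $n$. *)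

theory Defs
  imports Complex_Main "HOL-Library.Extended_Real" "HOL-Library.Liminf_Limsup"
begin

datatype recf =
    Zero
  | Succ
  | Proj nat
  | Orc nat
  | Comp recf "recf list"
  | Prim recf recf
  | Mn recf

inductive eval :: "(nat \<Rightarrow> nat) \<Rightarrow> recf \<Rightarrow> nat list \<Rightarrow> nat \<Rightarrow> bool"
  for g :: "nat \<Rightarrow> nat" where
  eval_Zero: "eval g Zero xs 0"
| eval_Succ: "eval g Succ (x # xs) (Suc x)"
| eval_Proj: "i < length xs \<Longrightarrow> eval g (Proj i) xs (xs ! i)"
| eval_Orc: "i < length xs \<Longrightarrow> eval g (Orc i) xs (g (xs ! i))"
| eval_Comp: "list_all2 (\<lambda>f y. eval g f xs y) fs ys \<Longrightarrow> eval g h ys z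
              \<Longrightarrow> eval g (Comp h fs) xs z"
| eval_Prim0: "eval g f xs y \<Longrightarrow> eval g (Prim f h) (0 # xs) y"
| eval_PrimS: "eval g (Prim f h) (n # xs) y \<Longrightarrow> eval g h (y # n # xs) z
              \<Longrightarrow> eval g (Prim f h) (Suc n # xs) z"
| eval_Mn: "eval g f (n # xs) 0 \<Longrightarrow> (\<forall>m<n. \<exists>k. eval g f (m # xs) (Suc k))
              \<Longrightarrow> eval g (Mn f) xs n"

text \<open>A function is computable if some program (not using the oracle) computes it.\<close>
definition computable :: "(nat \<Rightarrow> nat) \<Rightarrow> bool" where
  "computable x \<longleftrightarrow> (\<exists>f. \<forall>n. eval (\<lambda>_. 0) f [n] (x n))"

definition strong_le :: "(nat \<Rightarrow> nat) set \<Rightarrow> (nat \<Rightarrow> nat) set \<Rightarrow> bool" where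
  "strong_le B C \<longleftrightarrow> (\<exists>\<Phi>. \<forall>g\<in>C. \<exists>y\<in>B. \<forall>n. eval g \<Phi> [n] (y n))"

definition bitseq :: "(nat \<Rightarrow> nat) \<Rightarrow> bool" where
  "bitseq x \<longleftrightarrow> (\<forall>n. x n < 2)"

definition agree :: "(nat \<Rightarrow> nat) \<Rightarrow> (nat \<Rightarrow> nat) \<Rightarrow> nat set" where
  "agree x y = {n. x n = y n}"

definition lower_density :: "nat set \<Rightarrow> ereal" where
  "lower_density Z = liminf (\<lambda>n. ereal (real (card (Z \<inter> {..<n})) / real n))"

definition massD :: "real \<Rightarrow> (nat \<Rightarrow> nat) set" where
  "massD p = {y. bitseq y \<and> (\<forall>x. computable x \<and> bitseq x \<longrightarrow> lower_density (agree x y) \<le> ereal p)}"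

definition massB :: "real \<Rightarrow> (nat \<Rightarrow> nat) set" where
  "massB p = {y. bitseq y \<and> (\<forall>x. computable x \<and> bitseq x \<longrightarrow> lower_density (agree x y) > ereal p)}"

definition IOE :: "(nat \<Rightarrow> nat) \<Rightarrow> (nat \<Rightarrow> nat) set" where
  "IOE h = {y. \<forall>x. computable x \<and> (\<forall>n. x n < h n) \<longrightarrow> infinite {n. x n = y n}}"

definition AED :: "(nat \<Rightarrow> nat) \<Rightarrow> (nat \<Rightarrow> nat) set" where
  "AED h = {y. (\<forall>n. y n < h n) \<and> (\<forall>x. computable x \<longrightarrow> finite {n. x n = y n})}"

end

theory Submission
  imports Defs "HOL-Library.Infinite_Set"
begin


definition prc :: "(nat \<Rightarrow> nat) set \<Rightarrow> nat \<Rightarrow> ((nat \<Rightarrow> nat) \<Rightarrow> nat list \<Rightarrow> nat) \<Rightarrow> bool" where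
  "prc G k F \<longleftrightarrow> (\<exists>f. \<forall>g\<in>G. \<forall>xs. length xs = k \<longrightarrow> eval g f xs (F g xs))"

lemma prc_cong:
  assumes "prc G k F" "\<And>g xs. g \<in> G \<Longrightarrow> length xs = k \<Longrightarrow> F g xs = F' g xs"
  shows "prc G k F'"
  using assms unfolding prc_def by metis

lemma prc_zero: "prc G k (\<lambda>g xs. 0)"
  unfolding prc_def by (auto intro: eval.intros)

lemma prc_proj: "i < k \<Longrightarrow> prc G k (\<lambda>g xs. xs ! i)"
  unfolding prc_def by (rule exI[of _ "Proj i"]) (auto intro: eval.intros)

lemma prc_orc1: "prc G (Suc 0) (\<lambda>g xs. g (xs ! 0))"
  unfolding prc_def by (rule exI[of _ "Orc 0"]) (auto intro: eval.intros)

lemma prc_succ1: "prc G (Suc 0) (\<lambda>g xs. Suc (xs ! 0))"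
  unfolding prc_def by (rule exI[of _ "Succ"]) (auto intro: eval.intros simp: length_Suc_conv)

lemma prc_progs:
  assumes "\<forall>F\<in>set Fs. prc G k F"
  shows "\<exists>fs. length fs = length Fs \<and> (\<forall>i<length Fs. \<forall>g\<in>G. \<forall>xs. length xs = k \<longrightarrow> eval g (fs!i) xs ((Fs!i) g xs))"
using assms proof (induction Fs)
  case Nil then show ?case by auto
next
  case (Cons F Fs)
  then obtain fs where fs: "length fs = length Fs" "\<forall>i<length Fs. \<forall>g\<in>G. \<forall>xs. length xs = k \<longrightarrow> eval g (fs!i) xs ((Fs!i) g xs)" by auto
  from Cons.prems obtain f where f: "\<forall>g\<in>G. \<forall>xs. length xs = k \<longrightarrow> eval g f xs (F g xs)" unfolding prc_def by auto
  show ?case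
    apply (rule exI[of _ "f # fs"])
    using fs f by (auto simp: nth_Cons split: nat.splits)
qed

lemma prc_comp:
  assumes "prc G (length Fs) H" "\<forall>F\<in>set Fs. prc G k F"
  shows "prc G k (\<lambda>g xs. H g (map (\<lambda>F. F g xs) Fs))"
proof -
  obtain h where h: "\<forall>g\<in>G. \<forall>ys. length ys = length Fs \<longrightarrow> eval g h ys (H g ys)"
    using assms(1) unfolding prc_def by auto
  obtain fs where fs: "length fs = length Fs" "\<forall>i<length Fs. \<forall>g\<in>G. \<forall>xs. length xs = k \<longrightarrow> eval g (fs!i) xs ((Fs!i) g xs)"
    using prc_progs[OF assms(2)] by auto
  show ?thesis unfolding prc_def
  proof (intro exI[of _ "Comp h fs"] ballI allI impI)
    fix g and xs :: "nat list" assume g: "g \<in> G" and xs: "length xs = k"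
    have "list_all2 (\<lambda>f y. eval g f xs y) fs (map (\<lambda>F. F g xs) Fs)"
      using fs g xs by (auto intro!: list_all2_all_nthI)
    moreover have "eval g h (map (\<lambda>F. F g xs) Fs) (H g (map (\<lambda>F. F g xs) Fs))" using h g by auto
    ultimately show "eval g (Comp h fs) xs (H g (map (\<lambda>F. F g xs) Fs))" by (rule eval_Comp)
  qed
qed

lemma prc_prim:
  assumes "prc G k F" "prc G (Suc (Suc k)) H"
    and R0: "\<And>g xs. g \<in> G \<Longrightarrow> length xs = k \<Longrightarrow> R g (0 # xs) = F g xs"
    and RS: "\<And>g n xs. g \<in> G \<Longrightarrow> length xs = k \<Longrightarrow> R g (Suc n # xs) = H g (R g (n # xs) # n # xs)"
  shows "prc G (Suc k) R"
proof -
  obtain f where f: "\<forall>g\<in>G. \<forall>xs. length xs = k \<longrightarrow> eval g f xs (F g xs)"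
    using assms(1) unfolding prc_def by auto
  obtain h where h: "\<forall>g\<in>G. \<forall>xs. length xs = Suc (Suc k) \<longrightarrow> eval g h xs (H g xs)"
    using assms(2) unfolding prc_def by auto
  have *: "eval g (Prim f h) (n # xs) (R g (n # xs))" if "g \<in> G" "length xs = k" for g n xs
    using that proof (induction n)
    case 0 then show ?case using f R0 by (auto intro: eval_Prim0)
  next
    case (Suc n)
    then show ?case using h RS by (auto intro: eval_PrimS)
  qed
  show ?thesis unfolding prc_def
    by (intro exI[of _ "Prim f h"]) (auto simp: length_Suc_conv intro: *)
qed

lemma map_nth_tl:
  assumes "length xs = Suc k" shows "map (nth xs) [Suc 0..<Suc k] = tl xs"
proof -
  have e: "[Suc 0..<Suc k] = map Suc [0..<k]" by (simp add: map_Suc_upt)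
  obtain y ys where xs: "xs = y # ys" and "length ys = k" using assms by (cases xs) auto
  then have "map (nth ys) [0..<k] = ys" using map_nth[of ys] by simp
  then show ?thesis unfolding e xs by (simp add: comp_def)
qed

lemma pc_tl: assumes "prc G k F" shows "prc G (Suc k) (\<lambda>g xs. F g (tl xs))"
proof -
  have "prc G (Suc k) (\<lambda>g xs. F g (map (\<lambda>F. F g xs) (map (\<lambda>i g xs. xs ! i) [Suc 0..<Suc k])))"
    by (rule prc_comp) (auto intro!: prc_proj simp: assms simp del: upt_Suc)
  then show ?thesis
    by (rule prc_cong) (simp add: comp_def map_nth_tl[symmetric] del: upt_Suc)
qed

lemma pc_subst: "prc G (Suc k) F \<Longrightarrow> prc G k E \<Longrightarrow> prc G k (\<lambda>g xs. F g (E g xs # xs))"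
  apply (rule prc_cong[OF prc_comp[of G "E # map (\<lambda>i g xs. xs ! i) [0..<k]" F]])
  by (auto intro!: prc_proj simp: comp_def map_nth)

lemma pc_1: "prc G (Suc 0) H \<Longrightarrow> prc G k F \<Longrightarrow> prc G k (\<lambda>g xs. H g [F g xs])"
  using prc_comp[of G "[F]" H k] by simp

lemma pc_2: "prc G 2 H \<Longrightarrow> prc G k F1 \<Longrightarrow> prc G k F2 \<Longrightarrow> prc G k (\<lambda>g xs. H g [F1 g xs, F2 g xs])"
  using prc_comp[of G "[F1, F2]" H k] by (simp add: numeral_2_eq_2)



lemma pc_const: "prc G k (\<lambda>g xs. c)"
proof (induction c)
  case 0 show ?case by (rule prc_zero)
next
  case (Suc c)
  from pc_1[OF prc_succ1 Suc] show ?case by simp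
qed

lemma pc_succ: "prc G k F \<Longrightarrow> prc G k (\<lambda>g xs. Suc (F g xs))"
  using pc_1[OF prc_succ1] by simp

lemma pc_orc: "prc G k F \<Longrightarrow> prc G k (\<lambda>g xs. g (F g xs))"
  using pc_1[OF prc_orc1] by simp

lemma add2: "prc G 2 (\<lambda>g xs. xs!0 + xs!1)"
proof -
  have H: "prc G (Suc (Suc (Suc 0))) (\<lambda>g xs. Suc (xs!0))" by (rule pc_succ, rule prc_proj, simp)
  have "prc G (Suc (Suc 0)) (\<lambda>g xs. xs!0 + xs!1)"
    by (rule prc_prim[OF prc_proj[of 0 "Suc 0"] H]) (auto simp: length_Suc_conv)
  then show ?thesis by (simp add: numeral_2_eq_2)
qed

lemma pc_add: "prc G k F1 \<Longrightarrow> prc G k F2 \<Longrightarrow> prc G k (\<lambda>g xs. F1 g xs + F2 g xs)"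
  using pc_2[OF add2] by simp

lemma mult2: "prc G 2 (\<lambda>g xs. xs!0 * xs!1)"
proof -
  have "prc G (Suc (Suc (Suc 0))) (\<lambda>g xs. xs!0 + xs!2)" by (rule pc_add; rule prc_proj; simp)
  then have "prc G (Suc (Suc 0)) (\<lambda>g xs. xs!0 * xs!1)"
    by (rule prc_prim[OF prc_zero]) (auto simp: length_Suc_conv numeral_2_eq_2)
  then show ?thesis by (simp add: numeral_2_eq_2)
qed

lemma pc_mult: "prc G k F1 \<Longrightarrow> prc G k F2 \<Longrightarrow> prc G k (\<lambda>g xs. F1 g xs * F2 g xs)"
  using pc_2[OF mult2] by simp

lemma pred1: "prc G (Suc 0) (\<lambda>g xs. xs!0 - 1)"
  by (rule prc_prim[OF prc_zero prc_proj[of 1]]) auto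

lemma sub2: "prc G 2 (\<lambda>g xs. xs!1 - xs!0)"
proof -
  have H: "prc G (Suc (Suc (Suc 0))) (\<lambda>g xs. xs!0 - 1)" using pc_1[OF pred1 prc_proj[of 0]] by simp
  have "prc G (Suc (Suc 0)) (\<lambda>g xs. xs!1 - xs!0)"
    by (rule prc_prim[OF prc_proj[of 0 "Suc 0"] H]) (auto simp: length_Suc_conv)
  then show ?thesis by (simp add: numeral_2_eq_2)
qed

lemma pc_sub: "prc G k F1 \<Longrightarrow> prc G k F2 \<Longrightarrow> prc G k (\<lambda>g xs. F1 g xs - F2 g xs)"
  using pc_2[OF sub2] by fastforce

lemma pow2: "prc G 2 (\<lambda>g xs. xs!1 ^ xs!0)"
proof -
  have "prc G (Suc (Suc (Suc 0))) (\<lambda>g xs. xs!0 * xs!2)" by (rule pc_mult; rule prc_proj; simp)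
  then have "prc G (Suc (Suc 0)) (\<lambda>g xs. xs!1 ^ xs!0)"
    by (rule prc_prim[OF pc_const]) (auto simp: length_Suc_conv numeral_2_eq_2)
  then show ?thesis by (simp add: numeral_2_eq_2)
qed

lemma pc_pow: "prc G k F1 \<Longrightarrow> prc G k F2 \<Longrightarrow> prc G k (\<lambda>g xs. F1 g xs ^ F2 g xs)"
  using pc_2[OF pow2] by fastforce

lemma pc_le: "prc G k F1 \<Longrightarrow> prc G k F2 \<Longrightarrow> prc G k (\<lambda>g xs. of_bool (F1 g xs \<le> F2 g xs))"
proof -
  assume a: "prc G k F1" "prc G k F2"
  show ?thesis
    by (rule prc_cong[OF pc_sub[OF pc_const[where c=1] pc_sub[OF a]]]) auto
qed

lemma mod2: "prc G (Suc 0) (\<lambda>g xs. xs!0 mod 2)"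
proof -
  have "prc G (Suc (Suc 0)) (\<lambda>g xs. 1 - xs!0)" by (rule pc_sub; rule pc_const prc_proj; simp)
  then show ?thesis
    by (rule prc_prim[OF prc_zero]) (auto simp: mod_Suc)
qed

lemma half: "prc G (Suc 0) (\<lambda>g xs. xs!0 div 2)"
proof -
  have "prc G (Suc (Suc 0)) (\<lambda>g xs. xs!0 + xs!1 mod 2)"
    using pc_add[OF prc_proj pc_1[OF mod2 prc_proj[of 1]], of 0] by simp
  then show ?thesis
    by (rule prc_prim[OF prc_zero]) (auto, presburger)
qed

lemma divpow: "prc G 2 (\<lambda>g xs. xs!1 div 2 ^ xs!0)"
proof -
  have H: "prc G (Suc (Suc (Suc 0))) (\<lambda>g xs. xs!0 div 2)" using pc_1[OF half prc_proj[of 0]] by simp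
  have "prc G (Suc (Suc 0)) (\<lambda>g xs. xs!1 div 2 ^ xs!0)"
    by (rule prc_prim[OF prc_proj[of 0 "Suc 0"] H]) (auto simp: length_Suc_conv power_Suc2, metis div_mult2_eq mult.commute)
  then show ?thesis by (simp add: numeral_2_eq_2)
qed

definition bitn :: "nat \<Rightarrow> nat \<Rightarrow> nat" where "bitn i m = (m div 2 ^ i) mod 2"

lemma pc_bitn: "prc G k F1 \<Longrightarrow> prc G k F2 \<Longrightarrow> prc G k (\<lambda>g xs. bitn (F1 g xs) (F2 g xs))"
  unfolding bitn_def using pc_1[OF mod2 pc_2[OF divpow]] by fastforce

lemma sum1: assumes "prc G (Suc k) F"
  shows "prc G (Suc k) (\<lambda>g xs. \<Sum>j<hd xs. F g (j # tl xs))"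
proof -
  have "prc G (Suc (Suc k)) (\<lambda>g xs. xs!0 + F g (tl xs))"
    by (rule pc_add[OF prc_proj pc_tl[OF assms]]) simp
  then show ?thesis
    by (rule prc_prim[OF prc_zero]) auto
qed

lemma pc_sum: "prc G (Suc k) F \<Longrightarrow> prc G k M \<Longrightarrow> prc G k (\<lambda>g xs. \<Sum>j<M g xs. F g (j # xs))"
  using pc_subst[OF sum1] by simp



definition bl :: "nat \<Rightarrow> nat \<Rightarrow> nat" where "bl a p = (\<Sum>m<p. of_bool (a^m \<le> p))"
definition st :: "nat \<Rightarrow> nat \<Rightarrow> nat" where "st a n = a^(n-1) * of_bool (1 \<le> n)"
definition off :: "nat \<Rightarrow> nat \<Rightarrow> nat" where "off a p = p - st a (bl a p)"
definition len :: "nat \<Rightarrow> nat \<Rightarrow> nat" where "len a n = a^n - st a n"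
definition enc :: "nat \<Rightarrow> (nat \<Rightarrow> nat) \<Rightarrow> nat \<Rightarrow> nat" where
  "enc a c n = (\<Sum>j<len a n. c (st a n + j) * 2^j)"

lemma lt_pow: "2 \<le> a \<Longrightarrow> m < a ^ m"
proof -
  assume "2 \<le> a"
  have "m < 2 ^ m" by (rule less_exp)
  also have "\<dots> \<le> a ^ m" using \<open>2 \<le> a\<close> by (rule power_mono) simp
  finally show ?thesis .
qed

lemma bl_eq:
  assumes a: "2 \<le> a" and p: "st a n \<le> p" "p < a^n"
  shows "bl a p = n"
proof -
  have "{..<p} \<inter> {m. a^m \<le> p} = {..<n}"
  proof (intro set_eqI iffI)
    fix m assume "m \<in> {..<p} \<inter> {m. a^m \<le> p}"
    then have "a^m < a^n" using p by auto
    then show "m \<in> {..<n}" using a by (simp add: power_strict_increasing_iff)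
  next
    fix m assume "m \<in> {..<n}" then have mn: "m < n" by simp
    then have s: "st a n = a^(n-1)" by (simp add: st_def)
    have "a^m \<le> a^(n-1)" using mn a by (intro power_increasing) auto
    then have "a^m \<le> p" using p s by simp
    moreover have "m < a^m" using a by (rule lt_pow)
    ultimately show "m \<in> {..<p} \<inter> {m. a^m \<le> p}" by auto
  qed
  then show ?thesis unfolding bl_def by simp
qed

lemma bl_bounds:
  assumes a: "2 \<le> a"
  shows "st a (bl a p) \<le> p \<and> p < a ^ bl a p"
proof -
  define n where "n = (LEAST n. p < a^n)"
  have ex: "p < a^p" using a by (rule lt_pow)
  have pn: "p < a^n" unfolding n_def by (rule LeastI[of "\<lambda>n. p < a^n", OF ex])
  have sn: "st a n \<le> p"
  proof (cases n)
    case 0 then show ?thesis by (simp add: st_def)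
  next
    case (Suc m)
    then have "m < n" by simp
    then have "\<not> p < a^m" unfolding n_def by (rule not_less_Least)
    then show ?thesis using Suc by (simp add: st_def)
  qed
  have "bl a p = n" using bl_eq[OF a sn pn] .
  then show ?thesis using sn pn by simp
qed

lemma sum_shift2: "(\<Sum>j<Suc L. c j * 2^j) = c 0 + 2 * (\<Sum>j<L. c (Suc j) * (2::nat)^j)"
  by (subst sum.lessThan_Suc_shift) (simp add: sum_distrib_left mult.left_commute del: sum.lessThan_Suc)

lemma bits_sum:
  "(\<forall>j<L. c j < 2) \<Longrightarrow> i < L \<Longrightarrow> bitn i (\<Sum>j<L. c j * 2^j) = c i"
proof (induction i arbitrary: L c)
  case 0
  then obtain L' where L: "L = Suc L'" by (cases L) auto
  have "c 0 < 2" using 0 by auto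
  then show ?case unfolding L sum_shift2 bitn_def by simp
next
  case (Suc i)
  then obtain L' where L: "L = Suc L'" by (cases L) auto
  have c0: "c 0 < 2" using Suc.prems by auto
  have "(c 0 + 2 * (\<Sum>j<L'. c (Suc j) * 2^j)) div 2 = (\<Sum>j<L'. c (Suc j) * 2^j)"
    using c0 by simp
  moreover have "bitn (Suc i) m = bitn i (m div 2)" for m
    unfolding bitn_def by (simp add: div_mult2_eq)
  moreover have "bitn i (\<Sum>j<L'. c (Suc j) * 2^j) = c (Suc i)"
    using Suc.IH[of L' "\<lambda>j. c (Suc j)"] Suc.prems L by auto
  ultimately show ?case unfolding L sum_shift2 by simp
qed

lemma sum_bits_less: "(\<forall>j<L. c j < 2) \<Longrightarrow> (\<Sum>j<L. c j * 2^j) < (2::nat)^L"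
proof (induction L)
  case 0 then show ?case by simp
next
  case (Suc L)
  then have "(\<Sum>j<L. c j * 2^j) < 2^L" by auto
  moreover have "c L * 2^L \<le> 2^L" using Suc.prems by auto
  ultimately have "(\<Sum>j<L. c j * 2^j) + c L * 2^L < 2^L + 2^L" by linarith
  then show ?case by simp
qed

lemma enc_less: "(\<forall>p. c p < 2) \<Longrightarrow> enc a c n < 2 ^ (a ^ n)"
proof -
  assume "\<forall>p. c p < 2"
  then have "enc a c n < 2 ^ len a n" unfolding enc_def by (intro sum_bits_less) auto
  also have "\<dots> \<le> 2 ^ (a^n)" unfolding len_def by (intro power_increasing) auto
  finally show ?thesis .
qed

lemma enc_dec:
  assumes a: "2 \<le> a" and c: "\<forall>p. c p < 2" and p: "st a n \<le> p" "p < a^n"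
  shows "bitn (off a p) (enc a c n) = c p"
proof -
  have b: "bl a p = n" by (rule bl_eq[OF a p])
  have "off a p < len a n" using p b unfolding off_def len_def by simp
  then have "bitn (off a p) (enc a c n) = c (st a n + off a p)"
    unfolding enc_def using c by (intro bits_sum) auto
  also have "st a n + off a p = p" using p b unfolding off_def by simp
  finally show ?thesis .
qed

lemma ld_le:
  assumes "\<forall>N. \<exists>n\<ge>N. ereal (real (card (Z \<inter> {..<n})) / real n) \<le> c"
  shows "lower_density Z \<le> c"
proof (rule ccontr)
  assume "\<not> ?thesis"
  then have "c < lower_density Z" by simp
  then have "eventually (\<lambda>n. c < ereal (real (card (Z \<inter> {..<n})) / real n)) sequentially"
    unfolding lower_density_def by (rule less_LiminfD)
  then obtain N where "\<forall>n\<ge>N. c < ereal (real (card (Z \<inter> {..<n})) / real n)"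
    by (auto simp: eventually_sequentially)
  with assms show False by (meson not_le)
qed

lemma ld_le1: "lower_density Z \<le> 1"
proof (rule ld_le, intro allI exI conjI)
  fix N :: nat
  show "N \<le> N" by simp
  have "card (Z \<inter> {..<N}) \<le> card {..<N}" by (rule card_mono) auto
  then have "real (card (Z \<inter> {..<N})) \<le> real N" by simp
  then have "real (card (Z \<inter> {..<N})) / real N \<le> 1"
    by (cases "N = 0") (auto simp: divide_le_eq_1)
  then show "ereal (real (card (Z \<inter> {..<N})) / real N) \<le> 1" by simp
qed

lemma dens_blocks:
  assumes a: "2 \<le> a" and inf: "infinite {n. \<forall>p. st a n \<le> p \<and> p < a^n \<longrightarrow> x p \<noteq> z p}"
  shows "lower_density (agree x z) \<le> ereal (1 / real a)"
proof (rule ld_le, intro allI)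
  fix N
  obtain n where n: "n \<ge> Suc N" "\<forall>p. st a n \<le> p \<and> p < a^n \<longrightarrow> x p \<noteq> z p"
    using inf unfolding infinite_nat_iff_unbounded_le by blast
  have n1: "st a n = a^(n-1)" using n(1) by (simp add: st_def)
  have an: "a^n = a * a^(n-1)" using n(1) by (metis Suc_le_D power_Suc diff_Suc_1)
  have "agree x z \<inter> {..<a^n} \<subseteq> {..<a^(n-1)}"
    using n(2) n1 unfolding agree_def by (auto simp: not_less[symmetric])
  then have "card (agree x z \<inter> {..<a^n}) \<le> a^(n-1)"
    using card_mono[of "{..<a^(n-1)}"] by fastforce
  then have "real (card (agree x z \<inter> {..<a^n})) / real (a^n) \<le> real (a^(n-1)) / real (a^n)"
    by (intro divide_right_mono) auto
  also have "\<dots> = 1 / real a" using a unfolding an by simp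
  finally have r: "ereal (real (card (agree x z \<inter> {..<a^n})) / real (a^n)) \<le> ereal (1 / real a)"
    by simp
  have "N \<le> n" using n by simp
  also have "n \<le> a^n" using lt_pow[OF a, of n] by simp
  finally show "\<exists>m\<ge>N. ereal (real (card (agree x z \<inter> {..<m})) / real m) \<le> ereal (1 / real a)"
    using r by blast
qed

lemma pc_bl: "prc G k E \<Longrightarrow> prc G k (\<lambda>g xs. bl a (E g xs))"
proof -
  assume E: "prc G k E"
  have "prc G (Suc (Suc 0)) (\<lambda>g ys. of_bool (a ^ (ys!0) \<le> ys!1))"
    by (intro pc_le pc_pow pc_const prc_proj) auto
  then have "prc G (Suc 0) (\<lambda>g xs. \<Sum>j<xs!0. of_bool (a ^ ((j#xs)!0) \<le> (j#xs)!1))"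
    by (rule pc_sum) (rule prc_proj, simp)
  then have "prc G (Suc 0) (\<lambda>g xs. bl a (xs!0))"
    by (rule prc_cong) (simp add: bl_def)
  from pc_1[OF this E] show ?thesis by simp
qed

lemma pc_st: "prc G k E \<Longrightarrow> prc G k (\<lambda>g xs. st a (E g xs))"
  unfolding st_def by (intro pc_mult pc_pow pc_const pc_sub pc_le)

lemma pc_len: "prc G k E \<Longrightarrow> prc G k (\<lambda>g xs. len a (E g xs))"
  unfolding len_def by (intro pc_sub pc_pow pc_const pc_st)

lemma pc_off: "prc G k E \<Longrightarrow> prc G k (\<lambda>g xs. off a (E g xs))"
  unfolding off_def by (intro pc_sub pc_st pc_bl)

lemma pc_enc:
  assumes C: "prc G (Suc 0) (\<lambda>g xs. C g (xs!0))" and E: "prc G k E"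
  shows "prc G k (\<lambda>g xs. enc a (C g) (E g xs))"
proof -
  have C': "prc G k' (\<lambda>g xs. C g (F g xs))" if "prc G k' F" for k' F
    using pc_1[OF C that] by simp
  have "prc G (Suc (Suc 0)) (\<lambda>g ys. C g (st a (ys!1) + ys!0) * 2 ^ (ys!0))"
    by (intro pc_mult C' pc_add pc_st prc_proj pc_pow pc_const) auto
  then have "prc G (Suc 0) (\<lambda>g xs. \<Sum>j<len a (xs!0). C g (st a ((j#xs)!1) + (j#xs)!0) * 2 ^ ((j#xs)!0))"
    by (rule pc_sum) (intro pc_len prc_proj, simp)
  then have "prc G (Suc 0) (\<lambda>g xs. enc a (C g) (xs!0))"
    by (rule prc_cong) (simp add: enc_def)
  from pc_1[OF this E] show ?thesis by simp
qed



lemma comp_prc: "computable x \<Longrightarrow> prc {\<lambda>_. 0} (Suc 0) (\<lambda>g xs. x (xs!0))"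
  unfolding computable_def prc_def
  apply (elim exE)
  subgoal for f by (rule exI[of _ f]) (auto simp: length_Suc_conv)
  done

lemma prc_computable: "prc {\<lambda>_. 0} (Suc 0) (\<lambda>g xs. F (xs!0)) \<Longrightarrow> computable F"
  unfolding computable_def prc_def by (metis length_Cons list.size(3) nth_Cons_0 singletonI)

lemma zero_computable: "computable (\<lambda>_. 0)"
  unfolding computable_def by (auto intro: eval.intros)

lemma one_minus_ne: "b < 2 \<Longrightarrow> (1::nat) - b \<noteq> b"
  by (cases b) auto

lemma part1:
  assumes a: "2 \<le> a" and h: "\<And>n. h n = 2 ^ (a ^ n)"
  shows "strong_le (massD (1 / real a)) (IOE h)"
proof -
  have "prc UNIV (Suc 0) (\<lambda>g xs. bitn (off a (xs!0)) (g (bl a (xs!0))))"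
    by (intro pc_bitn pc_off pc_orc pc_bl prc_proj) auto
  then obtain f where f: "\<forall>g. \<forall>xs. length xs = Suc 0 \<longrightarrow> eval g f xs (bitn (off a (xs!0)) (g (bl a (xs!0))))"
    unfolding prc_def by auto
  show ?thesis unfolding strong_le_def
  proof (intro exI[of _ f] ballI)
    fix g assume g: "g \<in> IOE h"
    define y where "y = (\<lambda>n. bitn (off a n) (g (bl a n)))"
    have ev: "\<forall>n. eval g f [n] (y n)"
    proof
      fix n show "eval g f [n] (y n)" using spec[OF spec[OF f, of g], of "[n]"] unfolding y_def by simp
    qed
    have "y \<in> massD (1 / real a)"
      unfolding massD_def
    proof (intro CollectI conjI allI impI)
      show "bitseq y" unfolding bitseq_def y_def bitn_def by simp
      fix x assume x: "computable x \<and> bitseq x"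
      define x' where "x' = enc a (\<lambda>p. 1 - x p)"
      have "prc {\<lambda>_. 0} (Suc 0) (\<lambda>g xs. 1 - x (xs!0))"
        by (intro pc_sub pc_const comp_prc) (use x in auto)
      then have "prc {\<lambda>_. 0} (Suc 0) (\<lambda>g xs. x' (xs!0))"
        unfolding x'_def by (rule pc_enc) (rule prc_proj, simp)
      then have cx': "computable x'" by (rule prc_computable)
      have "\<forall>n. x' n < h n" unfolding x'_def h by (intro allI enc_less) auto
      then have inf: "infinite {n. x' n = g n}" using g cx' unfolding IOE_def by auto
      have "{n. x' n = g n} \<subseteq> {n. \<forall>p. st a n \<le> p \<and> p < a^n \<longrightarrow> x p \<noteq> y p}"
      proof (intro subsetI CollectI allI impI)
        fix n p assume n: "n \<in> {n. x' n = g n}" and p: "st a n \<le> p \<and> p < a^n"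
        have "y p = bitn (off a p) (x' n)" using n bl_eq[OF a, of n p] p unfolding y_def by simp
        also have "\<dots> = 1 - x p" unfolding x'_def by (rule enc_dec[OF a]) (use p in auto)
        finally show "x p \<noteq> y p" using x one_minus_ne[of "x p"] unfolding bitseq_def by auto
      qed
      then have "infinite {n. \<forall>p. st a n \<le> p \<and> p < a^n \<longrightarrow> x p \<noteq> y p}"
        using inf infinite_super by blast
      then show "lower_density (agree x y) \<le> ereal (1 / real a)" by (rule dens_blocks[OF a])
    qed
    with ev show "\<exists>y\<in>massD (1 / real a). \<forall>n. eval g f [n] (y n)" by blast
  qed
qed

lemma part2:
  assumes a: "2 \<le> a" and h: "\<And>n. h n = 2 ^ (a ^ n)"
  shows "strong_le (AED h) (massB (1 / real a))"
proof -
  have C: "prc UNIV (Suc 0) (\<lambda>g xs. g (xs!0))" by (rule pc_orc, rule prc_proj, simp)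
  have E: "prc UNIV (Suc 0) (\<lambda>g xs. xs!0)" by (rule prc_proj) simp
  have "prc UNIV (Suc 0) (\<lambda>g xs. enc a g (xs!0))"
    using pc_enc[OF C E] by simp
  then obtain f where f: "\<forall>g. \<forall>xs. length xs = Suc 0 \<longrightarrow> eval g f xs (enc a g (xs!0))"
    unfolding prc_def by auto
  show ?thesis unfolding strong_le_def
  proof (intro exI[of _ f] ballI)
    fix g assume g: "g \<in> massB (1 / real a)"
    then have gb: "\<forall>p. g p < 2" unfolding massB_def bitseq_def by auto
    define y where "y = enc a g"
    have ev: "\<forall>n. eval g f [n] (y n)"
    proof
      fix n show "eval g f [n] (y n)" using spec[OF spec[OF f, of g], of "[n]"] unfolding y_def by simp
    qed
    have "y \<in> AED h"
      unfolding AED_def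
    proof (intro CollectI conjI allI impI)
      fix n show "y n < h n" unfolding y_def h using gb by (rule enc_less)
    next
      fix x assume cx: "computable x"
      show "finite {n. x n = y n}"
      proof (rule ccontr)
        assume inf: "infinite {n. x n = y n}"
        define x'' where "x'' = (\<lambda>p. 1 - bitn (off a p) (x (bl a p)))"
        have "prc {\<lambda>_. 0} (Suc 0) (\<lambda>g xs. x'' (xs!0))"
        proof -
          have P: "prc {\<lambda>_. 0} (Suc 0) (\<lambda>g xs. xs!0)" by (rule prc_proj) simp
          have X: "prc {\<lambda>_. 0} (Suc 0) (\<lambda>g xs. x (bl a (xs!0)))"
            using pc_1[OF comp_prc[OF cx] pc_bl[OF P]] by simp
          show ?thesis unfolding x''_def by (rule pc_sub[OF pc_const pc_bitn[OF pc_off[OF P] X]])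
        qed
        then have cx'': "computable x''" by (rule prc_computable)
        have bx'': "bitseq x''" unfolding bitseq_def x''_def by auto
        have "{n. x n = y n} \<subseteq> {n. \<forall>p. st a n \<le> p \<and> p < a^n \<longrightarrow> x'' p \<noteq> g p}"
        proof (intro subsetI CollectI allI impI)
          fix n p assume n: "n \<in> {n. x n = y n}" and p: "st a n \<le> p \<and> p < a^n"
          have "x'' p = 1 - bitn (off a p) (y n)" using n bl_eq[OF a, of n p] p unfolding x''_def by simp
          also have "\<dots> = 1 - g p" unfolding y_def by (subst enc_dec[OF a gb]) (use p in auto)
          finally show "x'' p \<noteq> g p" using gb one_minus_ne[of "g p"] by auto
        qed
        then have "infinite {n. \<forall>p. st a n \<le> p \<and> p < a^n \<longrightarrow> x'' p \<noteq> g p}"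
          using inf infinite_super by blast
        then have "lower_density (agree x'' g) \<le> ereal (1 / real a)" by (rule dens_blocks[OF a])
        moreover have "lower_density (agree x'' g) > ereal (1 / real a)"
          using g cx'' bx'' unfolding massB_def by auto
        ultimately show False by simp
      qed
    qed
    with ev show "\<exists>y\<in>AED h. \<forall>n. eval g f [n] (y n)" by blast
  qed
qed

theorem mainTheorem5:
  fixes a :: nat and h :: "nat \<Rightarrow> nat"
  assumes "a \<noteq> 0"
    and "\<And>n. h n = 2 ^ (a ^ n)"
  shows "strong_le (massD (1 / real a)) (IOE h) \<and> strong_le (AED h) (massB (1 / real a))"
proof (cases "a = 1")
  case False
  then have "2 \<le> a" using assms(1) by simp
  then show ?thesis using part1 part2 assms(2) by blast
next
  case True
  have s1: "strong_le (massD 1) (IOE h)"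
    unfolding strong_le_def
  proof (intro exI[of _ Zero] ballI bexI[of _ "\<lambda>_. 0"])
    fix g show "\<forall>n. eval g Zero [n] 0" by (auto intro: eval.intros)
    show "(\<lambda>_. 0) \<in> massD 1" unfolding massD_def bitseq_def
      using ld_le1 by (auto simp: one_ereal_def[symmetric])
  qed
  have "massB 1 = {}"
  proof -
    have "y \<notin> massB 1" for y
    proof
      assume "y \<in> massB 1"
      then have "lower_density (agree (\<lambda>_. 0) y) > 1"
        using zero_computable unfolding massB_def bitseq_def by (auto simp: one_ereal_def)
      with ld_le1 show False by (simp add: not_less[symmetric])
    qed
    then show ?thesis by blast
  qed
  then have s2: "strong_le (AED h) (massB 1)" unfolding strong_le_def by simp
  show ?thesis using s1 s2 True by simp
qed

end
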